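(* Let $b>0$. Then there exists $h_0\in(0,1)$ such that for all $h\in(0,h_0)$, \[ \mu_1(h,b)\le -h-\frac12h^{3/2}. \]
   Context: Let $\Omega=\{x\in\mathbb R^2:|x|<1\}$, $\mathbf A_0(x_1,x_2)=\frac12(-x_2,x_1)$. For $h>0$ and $b>0$ let \[ \mu_1(h,b)=\inf_{u\in H^1(\Omega),\,u\ne0}\frac{h^2\int_\Omega|(\nabla-ib\mathbf A_0)u|^2\,dx-h^{3/2}\int_{\partial\Omega}|u|^2\,ds}{\|u\|^2_{L^2(\Omega)}}, \] the lowest eigenvalue of the associated self-adjoint operator $\mathcal L_h^b=-(h\nabla-ibh\mathbf A_0)^2$ with the corresponding Robin boundary condition. (Equivalently $\mu_1(h,b)=h^2\lambda_1(b,-h^{-1/2})$.) *)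

theory Defs
  imports "HOL-Analysis.Analysis" "HOL-Library.Extended_Real"
begin

(* The plane R^2 is modelled by the type complex: x = (Re z, Im z).
   Omega = ball 0 1 (open unit disk), boundary = unit circle parametrised by cis t, ds = dt. *)

definition pd1 :: "(complex \<Rightarrow> complex) \<Rightarrow> complex \<Rightarrow> complex" where
  "pd1 u z = frechet_derivative u (at z) 1"

definition pd2 :: "(complex \<Rightarrow> complex) \<Rightarrow> complex \<Rightarrow> complex" where
  "pd2 u z = frechet_derivative u (at z) \<i>"

(* |(\<nabla> - i b A0) u|^2 with A0(x1,x2) = (-x2/2, x1/2) *)
definition mag_grad_sq :: "real \<Rightarrow> (complex \<Rightarrow> complex) \<Rightarrow> complex \<Rightarrow> real" where
  "mag_grad_sq b u z =
     (cmod (pd1 u z - \<i> * of_real b * of_real (- Im z / 2) * u z))\<^sup>2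
   + (cmod (pd2 u z - \<i> * of_real b * of_real (Re z / 2) * u z))\<^sup>2"

(* admissible trial functions: C^1 on an open neighbourhood of the closed unit disk,
   not identically zero on the disk (dense in H^1(Omega)) *)
definition admissible :: "(complex \<Rightarrow> complex) \<Rightarrow> bool" where
  "admissible u \<longleftrightarrow>
     (\<exists>S. open S \<and> cball 0 1 \<subseteq> S \<and> (\<forall>z\<in>S. u differentiable (at z))
          \<and> continuous_on S (pd1 u) \<and> continuous_on S (pd2 u))
     \<and> (\<exists>z\<in>ball 0 1. u z \<noteq> 0)"

definition rayleigh :: "real \<Rightarrow> real \<Rightarrow> (complex \<Rightarrow> complex) \<Rightarrow> real" where
  "rayleigh h b u =
     (h\<^sup>2 * (LINT z:ball 0 1|lborel. mag_grad_sq b u z)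
      - h powr (3/2) * (LBINT t=0..2*pi. (cmod (u (cis t)))\<^sup>2))
     / (LINT z:ball 0 1|lborel. (cmod (u z))\<^sup>2)"

(* lowest eigenvalue mu_1(h,b) as infimum of the Rayleigh quotient (in the extended reals) *)
definition mu1 :: "real \<Rightarrow> real \<Rightarrow> ereal" where
  "mu1 h b = (INF u \<in> {u. admissible u}. ereal (rayleigh h b u))"

end

theory Submission
  imports Defs
begin

lemma unit_ball_vol_2: "unit_ball_vol 2 = pi"
  by (simp add: eval_unit_ball_vol)

lemma radial:
  fixes f :: "real \<Rightarrow> real"
  assumes f[measurable]: "f \<in> borel_measurable borel"
  shows "(LINT z:ball (0::complex) 1|lborel. f ((cmod z)^2)) = pi * (LINT t:{0..1}|lborel. f t)"
proof -
  let ?M0 = "density lborel (indicator (ball (0::complex) 1))"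
  let ?g = "\<lambda>z::complex. (cmod z)^2"
  let ?N = "density lborel (\<lambda>t::real. ennreal (pi * indicator {0..1} t))"
  have g[measurable]: "?g \<in> borel_measurable borel" by measurable
  have eq: "distr ?M0 borel ?g = ?N"
  proof (rule measure_eqI_lessThan)
    show "sets (distr ?M0 borel ?g) = sets borel" by simp
    show "sets ?N = sets borel" by simp
    fix x :: real
    have e: "emeasure (distr ?M0 borel ?g) {x<..} = emeasure lborel (ball 0 1 \<inter> {z. x < (cmod z)^2})"
      by (subst emeasure_distr) (auto simp: emeasure_restricted vimage_def)
    have "emeasure lborel (ball 0 1 \<inter> {z::complex. x < (cmod z)^2}) \<le> emeasure lborel (ball (0::complex) 1)"
      by (intro emeasure_mono) auto
    also have "\<dots> = ennreal pi" by (simp add: emeasure_ball unit_ball_vol_2)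
    finally show "emeasure (distr ?M0 borel ?g) {x<..} < \<infinity>" using e by (simp add: top.not_eq_extremum le_less_trans)
    have n: "emeasure ?N {x<..} = ennreal pi * emeasure lborel ({0..1} \<inter> {x<..})"
    proof -
      have "emeasure ?N {x<..} = (\<integral>\<^sup>+t. ennreal pi * indicator ({0..1} \<inter> {x<..}) t \<partial>lborel)"
        by (subst emeasure_density) (auto intro!: nn_integral_cong split: split_indicator)
      also have "\<dots> = ennreal pi * emeasure lborel ({0..1} \<inter> {x<..})"
        by (rule nn_integral_cmult_indicator) auto
      finally show ?thesis .
    qed
    show "emeasure (distr ?M0 borel ?g) {x<..} = emeasure ?N {x<..}"
    proof (cases "x < 0")
      case True
      then have "ball 0 1 \<inter> {z::complex. x < (cmod z)^2} = ball 0 1"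
        by (auto intro: less_le_trans)
      moreover have "{0..1} \<inter> {x<..} = {0..(1::real)}" using True by auto
      ultimately show ?thesis using e n by (simp add: emeasure_ball unit_ball_vol_2)
    next
      case False
      show ?thesis
      proof (cases "x < 1")
        case True
        have s: "ball 0 1 \<inter> {z::complex. x < (cmod z)^2} = ball 0 1 - cball 0 (sqrt x)"
        proof -
          have "\<And>z::complex. (cmod z \<le> sqrt x) = ((cmod z)^2 \<le> x)"
            by (metis abs_norm_cancel real_sqrt_abs real_sqrt_le_iff)
          then show ?thesis by auto
        qed
        have "emeasure lborel (ball 0 1 - cball (0::complex) (sqrt x)) = ennreal pi - ennreal (pi * x)"
          using False True le_less_trans[of _ "sqrt x" 1]
          by (subst emeasure_Diff) (auto simp: emeasure_ball emeasure_cball unit_ball_vol_2 real_sqrt_less_iff)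
        also have "\<dots> = ennreal (pi * (1 - x))" using False True
          by (subst ennreal_minus) (auto simp: algebra_simps)
        finally have l: "emeasure lborel (ball 0 1 - cball (0::complex) (sqrt x)) = ennreal (pi * (1 - x))" .
        have "{0..1} \<inter> {x<..} = {x<..(1::real)}" using False by auto
        then show ?thesis using e n s l False True by (simp add: ennreal_mult)
      next
        case False2: False
        have "ball 0 1 \<inter> {z::complex. x < (cmod z)^2} = {}"
        proof -
          have "\<And>z::complex. cmod z < 1 \<Longrightarrow> (cmod z)^2 < 1"
            by (simp add: power_less_one_iff)
          then show ?thesis using False2 by fastforce
        qed
        moreover have "{0..1} \<inter> {x<..} = ({}::real set)" using False2 by auto
        ultimately show ?thesis using e n by simp
      qed
    qed
  qed
  have "(LINT z:ball (0::complex) 1|lborel. f ((cmod z)^2)) = integral\<^sup>L ?M0 (\<lambda>z. f (?g z))"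
  proof -
    have "integral\<^sup>L (density lborel (\<lambda>z. ennreal (indicator (ball (0::complex) 1) z))) (\<lambda>z. f (?g z))
       = (LINT z:ball (0::complex) 1|lborel. f ((cmod z)^2))"
      unfolding set_lebesgue_integral_def
      by (subst integral_density) (auto intro: borel_measurable_indicator)
    moreover have "(\<lambda>z. ennreal (indicator (ball (0::complex) 1) z)) = indicator (ball 0 1)"
      by (simp add: fun_eq_iff split: split_indicator)
    ultimately show ?thesis by simp
  qed
  also have "\<dots> = integral\<^sup>L (distr ?M0 borel ?g) f"
    by (subst integral_distr) auto
  also have "\<dots> = integral\<^sup>L ?N f" by (simp only: eq)
  also have "\<dots> = integral\<^sup>L lborel (\<lambda>t. (pi * indicator {0..1} t) *\<^sub>R f t)"
    by (subst integral_density) auto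
  also have "\<dots> = pi * (LINT t:{0..1}|lborel. f t)"
    unfolding set_lebesgue_integral_def by (simp add: mult.assoc)
  finally show ?thesis .
qed

definition ut :: "real \<Rightarrow> complex \<Rightarrow> complex" where
  "ut s z = complex_of_real (exp (s/2 * ((Re z)^2 + (Im z)^2 - 1)))"

lemma ut_deriv:
  "(ut s has_derivative (\<lambda>w. complex_of_real (exp (s/2 * ((Re z)^2 + (Im z)^2 - 1)) * s * (Re z * Re w + Im z * Im w)))) (at z)"
proof -
  have "((\<lambda>z. complex_of_real (exp (s/2 * ((Re z)^2 + (Im z)^2 - 1)))) has_derivative (\<lambda>w. complex_of_real (exp (s/2 * ((Re z)^2 + (Im z)^2 - 1)) * s * (Re z * Re w + Im z * Im w)))) (at z)"
    by (auto intro!: derivative_eq_intros simp: fun_eq_iff algebra_simps)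
  then show ?thesis unfolding ut_def[abs_def] .
qed

lemma pd1_ut: "pd1 (ut s) z = complex_of_real (exp (s/2 * ((Re z)^2 + (Im z)^2 - 1)) * s * Re z)"
  unfolding pd1_def frechet_derivative_at[OF ut_deriv[of s z], symmetric] by simp

lemma pd2_ut: "pd2 (ut s) z = complex_of_real (exp (s/2 * ((Re z)^2 + (Im z)^2 - 1)) * s * Im z)"
  unfolding pd2_def frechet_derivative_at[OF ut_deriv[of s z], symmetric] by simp

lemma ut_differentiable: "ut s differentiable (at z)"
  using ut_deriv differentiable_def by blast

lemma cmod_sq: "(cmod z)^2 = (Re z)^2 + (Im z)^2"
  by (simp add: cmod_power2)

lemma mag_ut: "mag_grad_sq b (ut s) z = (s^2 + b^2/4) * (cmod z)^2 * exp (s * ((cmod z)^2 - 1))"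
proof -
  define e where "e = exp (s/2 * ((Re z)^2 + (Im z)^2 - 1))"
  have ee: "e^2 = exp (s * ((cmod z)^2 - 1))"
    unfolding e_def cmod_sq by (simp add: power2_eq_square exp_add[symmetric])
  have 1: "pd1 (ut s) z - \<i> * of_real b * of_real (- Im z / 2) * ut s z = Complex (e * s * Re z) (e * b * Im z / 2)"
    by (simp add: pd1_ut ut_def e_def complex_eq_iff)
  have 2: "pd2 (ut s) z - \<i> * of_real b * of_real (Re z / 2) * ut s z = Complex (e * s * Im z) (-(e * b * Re z / 2))"
    by (simp add: pd2_ut ut_def e_def complex_eq_iff)
  have "mag_grad_sq b (ut s) z = (s^2 + b^2/4) * ((Re z)^2 + (Im z)^2) * e^2"
    unfolding mag_grad_sq_def 1 2 cmod_power2 by (simp add: power2_eq_square algebra_simps)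
  then show ?thesis using ee cmod_sq by simp
qed

lemma cmod_ut: "(cmod (ut s z))^2 = exp (s * ((cmod z)^2 - 1))"
  unfolding cmod_sq by (simp add: ut_def power2_eq_square exp_add[symmetric])

lemma admissible_ut: "admissible (ut s)"
  unfolding admissible_def
proof (intro conjI exI[of _ UNIV] bexI[of _ 0])
  have "pd1 (ut s) = (\<lambda>z. complex_of_real (exp (s/2 * ((Re z)^2 + (Im z)^2 - 1)) * s * Re z))"
    by (simp add: fun_eq_iff pd1_ut)
  then show "continuous_on UNIV (pd1 (ut s))" by (auto intro!: continuous_intros)
  have "pd2 (ut s) = (\<lambda>z. complex_of_real (exp (s/2 * ((Re z)^2 + (Im z)^2 - 1)) * s * Im z))"
    by (simp add: fun_eq_iff pd2_ut)
  then show "continuous_on UNIV (pd2 (ut s))" by (auto intro!: continuous_intros)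
qed (auto simp: ut_differentiable ut_def)

lemma ftc_real:
  fixes f F :: "real \<Rightarrow> real"
  assumes "a \<le> b" "\<And>x. a \<le> x \<Longrightarrow> x \<le> b \<Longrightarrow> (F has_real_derivative f x) (at x)"
    "continuous_on {a..b} f"
  shows "(LINT x:{a..b}|lborel. f x) = F b - F a"
  unfolding set_lebesgue_integral_def
  by (rule integral_FTC_atLeastAtMost)
     (use assms in \<open>auto simp: has_real_derivative_iff_has_vector_derivative[symmetric] intro: has_field_derivative_at_within\<close>)

lemma int1:
  fixes s :: real
  assumes "s > 0"
  shows "(LINT t:{0..1}|lborel. exp (s * (t - 1))) = (1 - exp (-s)) / s"
proof -
  have "(LINT t:{0..1}|lborel. exp (s * (t - 1))) = exp (s * (1 - 1)) / s - exp (s * (0 - 1)) / s"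
    by (rule ftc_real[where F="\<lambda>t. exp (s * (t - 1)) / s"])
       (use assms in \<open>auto intro!: derivative_eq_intros continuous_intros\<close>)
  then show ?thesis by (simp add: diff_divide_distrib)
qed

lemma int2:
  fixes s :: real
  assumes "s > 0"
  shows "(LINT t:{0..1}|lborel. t * exp (s * (t - 1))) = 1/s - (1 - exp (-s)) / s^2"
proof -
  have "(LINT t:{0..1}|lborel. t * exp (s * (t - 1))) = (1/s - 1/s^2) * exp (s * (1 - 1)) - (0/s - 1/s^2) * exp (s * (0 - 1))"
    by (rule ftc_real[where F="\<lambda>t. (t/s - 1/s^2) * exp (s * (t - 1))"])
       (use assms in \<open>auto intro!: derivative_eq_intros continuous_intros simp: field_simps power2_eq_square\<close>)
  then show ?thesis by (simp add: diff_divide_distrib)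
qed

lemma final_ineq:
  fixes s b E J :: real
  assumes s: "s \<ge> 1" and bs: "b^2 \<le> s" and E: "0 < E" "E \<le> 1/2"
    and J: "J = 1/s - (1 - E)/s^2"
  shows "((1/s^2)^2 * (pi * (s^2 + b^2/4) * J) - 1/s^3 * (2*pi)) / (pi * (1 - E) / s)
         \<le> -(1/s^2) - 1/2 * (1/s^3)"
proof -
  define D where "D = 1 - E"
  have D: "D \<ge> 1/2" "D > 0" "D < 1" using E by (auto simp: D_def)
  define X where "X = (s^2 + b^2/4) * J * s - 2 * s^2"
  define Y where "Y = -(s^2) - s/2"
  have Js: "J * s = 1 - D/s" using J s by (simp add: D_def field_simps power2_eq_square)
  have X: "X = -(s^2) - s*D + b^2/4 - b^2*D/(4* s)"
  proof -
    have "X = (s^2 + b^2/4) * (1 - D/s) - 2 * s^2" unfolding X_def by (simp add: mult.assoc Js)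
    also have "\<dots> = -(s^2) - s * D + b^2/4 - b^2 * D/(4 * s)" using s by (simp add: field_simps power2_eq_square)
    finally show ?thesis .
  qed
  have "D*Y - X = s^2*(1-D) + s*D/2 - b^2/4 + b^2*D/(4* s)"
    unfolding X Y_def by (simp add: algebra_simps)
  moreover have "s*D/2 - b^2/4 \<ge> 0" proof -
    have "s*D \<ge> s*(1/2)" using D s by (intro mult_left_mono) auto
    then show ?thesis using bs by linarith
  qed
  moreover have "s^2*(1-D) \<ge> 0" using D by simp
  moreover have "b^2*D/(4* s) \<ge> 0" using D s by simp
  ultimately have XY: "X \<le> D * Y" by linarith
  have L: "((1/s^2)^2 * (pi * (s^2 + b^2/4) * J) - 1/s^3 * (2*pi)) / (pi * (1 - E) / s) = X / (s^4 * D)"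
  proof -
    have s0: "s \<noteq> 0" using s by auto
    have N: "(1/s^2)^2 * (pi * (s^2 + b^2/4) * J) - 1/s^3 * (2*pi) = pi * X / s^5"
      unfolding X_def using s0 by (simp add: field_simps) (simp add: algebra_simps power2_eq_square eval_nat_numeral)
    have "pi * X / s^5 / (pi * (1 - E) / s) = X / (s^4 * D)"
      unfolding D_def using s0 D by (simp add: field_simps eval_nat_numeral D_def)
    then show ?thesis using N by simp
  qed
  have R: "-(1/s^2) - 1/2 * (1/s^3) = (D * Y) / (s^4 * D)"
    unfolding Y_def using s D by (simp add: field_simps power2_eq_square) (simp add: algebra_simps eval_nat_numeral)
  show ?thesis unfolding L R using XY s D by (intro divide_right_mono) auto
qed

theorem lemma2p2:
  fixes b :: real
  assumes "b > 0"
  shows "\<exists>h0. 0 < h0 \<and> h0 < 1 \<and>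
           (\<forall>h. 0 < h \<and> h < h0 \<longrightarrow> mu1 h b \<le> ereal (- h - 1/2 * h powr (3/2)))"
proof -
  define h0 :: real where "h0 = 1 / (b^2 + 2)^2"
  have bb: "b^2 + 2 \<ge> 2" by simp
  have "(b^2 + 2)^2 \<ge> 2^2" using bb by (intro power_mono) auto
  then have q: "(b^2 + 2)^2 \<ge> 4" by simp
  have h0: "0 < h0" "h0 < 1" unfolding h0_def using q by (auto simp: divide_less_eq)
  show ?thesis
  proof (intro exI[of _ h0] conjI allI impI h0)
    fix h :: real
    assume hh: "0 < h \<and> h < h0"
    define s where "s = 1 / sqrt h"
    have sqh: "sqrt h > 0" using hh by simp
    have "sqrt h < sqrt h0" using hh by simp
    also have "sqrt h0 = 1 / (b^2 + 2)" unfolding h0_def by (simp add: real_sqrt_divide)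
    finally have "sqrt h < 1 / (b^2 + 2)" .
    then have sb: "s > b^2 + 2" unfolding s_def using sqh bb by (simp add: field_simps)
    have s1: "s \<ge> 1" and s0: "s > 0" and bs: "b^2 \<le> s" using sb zero_le_power2[of b] by linarith+
    have hs: "h = 1 / s^2" unfolding s_def using hh by (simp add: power_divide)
    have hp: "h powr (3/2) = 1 / s^3"
    proof -
      have "h powr (3/2) = h powr (1 + 1/2)" by simp
      also have "\<dots> = h powr 1 * h powr (1/2)" by (rule powr_add)
      also have "\<dots> = h * sqrt h" using hh by (simp add: powr_half_sqrt)
      also have "\<dots> = (sqrt h)^3" using hh by (simp add: power3_eq_cube mult.assoc[symmetric])
      also have "\<dots> = 1 / s^3" unfolding s_def by (simp add: power_divide)
      finally show ?thesis .
    qed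
    define E where "E = exp (- s)"
    have E0: "E > 0" unfolding E_def by simp
    have "exp s \<ge> 1 + s" by (rule exp_ge_add_one_self)
    then have "E \<le> 1 / (1 + s)" unfolding E_def using s0 by (simp add: exp_minus field_simps)
    also have "\<dots> \<le> 1/2" using s1 by (simp add: field_simps)
    finally have E2: "E \<le> 1/2" .
    define J where "J = 1/s - (1 - E)/s^2"
    have G: "(LINT z:ball 0 1|lborel. mag_grad_sq b (ut s) z) = pi * ((s^2 + b^2/4) * J)"
    proof -
      have "mag_grad_sq b (ut s) = (\<lambda>z. (\<lambda>t. (s^2 + b^2/4) * (t * exp (s * (t - 1)))) ((cmod z)^2))"
        by (simp add: fun_eq_iff mag_ut)
      then have "(LINT z:ball 0 1|lborel. mag_grad_sq b (ut s) z) = pi * (LINT t:{0..1}|lborel. (s^2 + b^2/4) * (t * exp (s * (t - 1))))"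
        by (simp only:) (rule radial[where f="\<lambda>t. (s^2 + b^2/4) * (t * exp (s * (t - 1)))"], measurable)
      also have "\<dots> = pi * ((s^2 + b^2/4) * J)"
        using int2[OF s0] by (simp add: J_def E_def)
      finally show ?thesis .
    qed
    have D: "(LINT z:ball 0 1|lborel. (cmod (ut s z))^2) = pi * ((1 - E) / s)"
    proof -
      have "(\<lambda>z. (cmod (ut s z))^2) = (\<lambda>z. (\<lambda>t. exp (s * (t - 1))) ((cmod z)^2))"
        by (simp add: fun_eq_iff cmod_ut)
      then have "(LINT z:ball 0 1|lborel. (cmod (ut s z))^2) = pi * (LINT t:{0..1}|lborel. exp (s * (t - 1)))"
        by (simp only:) (rule radial[where f="\<lambda>t. exp (s * (t - 1))"], measurable)
      also have "\<dots> = pi * ((1 - E) / s)"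
        using int1[OF s0] by (simp add: E_def)
      finally show ?thesis .
    qed
    have B: "(LBINT t=0..2*pi. (cmod (ut s (cis t)))^2) = 2 * pi"
    proof -
      have "(\<lambda>t. (cmod (ut s (cis t)))^2) = (\<lambda>t. 1)"
        by (simp add: fun_eq_iff cmod_ut)
      then show ?thesis using interval_integral_const(2)[of 0 "2*pi" 1] by (simp add: zero_ereal_def)
    qed
    have R: "rayleigh h b (ut s) = ((1/s^2)^2 * (pi * (s^2 + b^2/4) * J) - 1/s^3 * (2*pi)) / (pi * (1 - E) / s)"
      unfolding rayleigh_def G D B hs[symmetric] hp by (simp add: hs mult.assoc)
    have "rayleigh h b (ut s) \<le> -(1/s^2) - 1/2 * (1/s^3)"
      unfolding R by (rule final_ineq[OF s1 bs E0 E2 J_def])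
    also have "\<dots> = - h - 1/2 * h powr (3/2)" unfolding hp by (simp add: hs)
    finally have ray: "rayleigh h b (ut s) \<le> - h - 1/2 * h powr (3/2)" .
    have "mu1 h b \<le> ereal (rayleigh h b (ut s))"
      unfolding mu1_def by (rule INF_lower) (simp add: admissible_ut)
    also have "\<dots> \<le> ereal (- h - 1/2 * h powr (3/2))" using ray by simp
    finally show "mu1 h b \<le> ereal (- h - 1/2 * h powr (3/2))" .
  qed
qed

end
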